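(* Let $A=(\Sigma,q,N,\delta)$ be a simple LQCA with $|N|=r\ge2$. Then every column $U_A(\cdot,c)$, $c\in\mathcal C_A$, has norm $1$ if and only if every $q$-cycle in the weighted de Bruijn graph $G_A$ has weight $1$.
   Context: A linear quantum cellular automaton (LQCA) is a tuple $A=(\Sigma,q,N,\delta)$ where $\Sigma$ is a finite nonempty set of states, $N=(a_1,\dots,a_r)$ is a strictly increasing sequence of integers, $\delta:\Sigma^r\to\mathbb C^\Sigma$ satisfies $\|\delta(w)\|>0$ for all $w$, and $q\in\Sigma$ satisfies $[\delta(q,\dots,q)](x)=1$ if $x=q$ and $0$ otherwise. It is simple if $a_r-a_1=r-1$. A configuration is a map $c:\mathbb Z\to\Sigma$ with $c_i\ne q$ for only finitely many $i$; $\mathcal C_A$ is the set of configurations. With $c_{i+N}=(c_{i+a_1},\dots,c_{i+a_r})$, $U_A(d,c)=\prod_{i\in\mathbb Z}[\delta(c_{i+N})](d_i)$, and $U_A(\cdot,c)$ is the column $d\mapsto U_A(d,c)$ with norm $\sqrt{\sum_d|U_A(d,c)|^2}$. The graph $G_A=(V,E,w)$ has vertex set $V=\Sigma^{r-1}$ (words of length $r-1$), edge set $E=\{(xz,zy):x,y\in\Sigma,z\in\Sigma^{r-2}\}$, and weight $w((xz,zy))=\|\delta(xzy)\|$. A path $(v_0,\dots,v_k)$ has weight $\prod_{i=0}^{k-1}w((v_i,v_{i+1}))$; it is a cycle if $k>0$ and $v_0=v_k$, and a $q$-cycle if moreover $v_0=q^{r-1}$. *)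

theory Defs
  imports "HOL-Analysis.Analysis"
begin

text \<open>The local rule delta is a function on words (only its values on words of
  length r matter); delta w is a vector in C^Sigma, i.e. a function 's => complex.\<close>

definition vnorm :: "('s::finite \<Rightarrow> complex) \<Rightarrow> real" where
  "vnorm f = sqrt (\<Sum>s\<in>UNIV. (cmod (f s))^2)"

definition is_lqca :: "'s::finite \<Rightarrow> int list \<Rightarrow> ('s list \<Rightarrow> 's \<Rightarrow> complex) \<Rightarrow> bool" where
  "is_lqca q N \<delta> \<longleftrightarrow>
     N \<noteq> [] \<and> sorted_wrt (<) N \<and>
     (\<forall>w. length w = length N \<longrightarrow> vnorm (\<delta> w) > 0) \<and>
     (\<forall>x. \<delta> (replicate (length N) q) x = (if x = q then 1 else 0))"

definition simple_lqca :: "int list \<Rightarrow> bool" where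
  "simple_lqca N \<longleftrightarrow> last N - hd N = int (length N) - 1"

definition configs :: "'s \<Rightarrow> (int \<Rightarrow> 's) set" where
  "configs q = {c. finite {i. c i \<noteq> q}}"

definition nbhd :: "(int \<Rightarrow> 's) \<Rightarrow> int list \<Rightarrow> int \<Rightarrow> 's list" where
  "nbhd c N i = map (\<lambda>a. c (i + a)) N"

text \<open>U_A(d,c) = prod over all i of delta(c_{i+N})(d_i). For configurations c, d all
  factors with c_{i+N} = q^r and d_i = q equal 1 and the remaining index set is
  finite, so the infinite product is this finite product.\<close>
definition Uop :: "'s \<Rightarrow> int list \<Rightarrow> ('s list \<Rightarrow> 's \<Rightarrow> complex) \<Rightarrow> (int \<Rightarrow> 's) \<Rightarrow> (int \<Rightarrow> 's) \<Rightarrow> complex" where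
  "Uop q N \<delta> d c =
     (\<Prod>i | nbhd c N i \<noteq> replicate (length N) q \<or> d i \<noteq> q. \<delta> (nbhd c N i) (d i))"

definition column_norm_one :: "'s \<Rightarrow> int list \<Rightarrow> ('s list \<Rightarrow> 's \<Rightarrow> complex) \<Rightarrow> (int \<Rightarrow> 's) \<Rightarrow> bool" where
  "column_norm_one q N \<delta> c \<longleftrightarrow>
     ((\<lambda>d. (cmod (Uop q N \<delta> d c))^2) has_sum 1) (configs q)"

definition gvert :: "nat \<Rightarrow> 's list \<Rightarrow> bool" where
  "gvert r v \<longleftrightarrow> length v = r - 1"

definition gedge :: "nat \<Rightarrow> 's list \<Rightarrow> 's list \<Rightarrow> bool" where
  "gedge r u v \<longleftrightarrow> (\<exists>x y z. length z = r - 2 \<and> u = x # z \<and> v = z @ [y])"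

text \<open>weight of edge (xz, zy) is ||delta(xzy)||, and xzy = hd u # v.\<close>
definition gweight :: "('s::finite list \<Rightarrow> 's \<Rightarrow> complex) \<Rightarrow> 's list \<Rightarrow> 's list \<Rightarrow> real" where
  "gweight \<delta> u v = vnorm (\<delta> (hd u # v))"

definition gpath :: "nat \<Rightarrow> 's list list \<Rightarrow> bool" where
  "gpath r vs \<longleftrightarrow> vs \<noteq> [] \<and> (\<forall>v\<in>set vs. gvert r v) \<and>
     (\<forall>j. Suc j < length vs \<longrightarrow> gedge r (vs ! j) (vs ! Suc j))"

definition path_weight :: "('s::finite list \<Rightarrow> 's \<Rightarrow> complex) \<Rightarrow> 's list list \<Rightarrow> real" where
  "path_weight \<delta> vs = (\<Prod>j<length vs - 1. gweight \<delta> (vs ! j) (vs ! Suc j))"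

definition q_cycle :: "'s \<Rightarrow> nat \<Rightarrow> 's list list \<Rightarrow> bool" where
  "q_cycle q r vs \<longleftrightarrow> gpath r vs \<and> length vs > 1 \<and>
     hd vs = last vs \<and> hd vs = replicate (r - 1) q"

end

theory Submission
  imports Defs "HOL-Library.FuncSet"
begin

lemma col_sum:
  fixes q :: "'s::finite" and \<delta> :: "'s list \<Rightarrow> 's \<Rightarrow> complex"
  assumes dq: "\<forall>x. \<delta> (replicate (length N) q) x = (if x = q then 1 else 0)"
    and fin: "finite S" and Sdef: "\<forall>i. i \<notin> S \<longrightarrow> nbhd c N i = replicate (length N) q"
  shows "((\<lambda>d. (cmod (Uop q N \<delta> d c))^2) has_sum (\<Prod>i\<in>S. (vnorm (\<delta> (nbhd c N i)))^2)) (configs q)"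
proof -
  define ext where "ext = (\<lambda>f::int\<Rightarrow>'s. \<lambda>i. if i \<in> S then f i else q)"
  define P where "P = PiE S (\<lambda>_. (UNIV::'s set))"
  define D where "D = ext ` P"
  have finP: "finite P" unfolding P_def using fin by (simp add: finite_PiE)
  have injP: "inj_on ext P"
  proof
    fix f g assume f: "f \<in> P" and g: "g \<in> P" and e: "ext f = ext g"
    show "f = g"
    proof
      fix i show "f i = g i"
      proof (cases "i \<in> S")
        case True thus ?thesis using fun_cong[OF e, of i] by (simp add: ext_def)
      next
        case False thus ?thesis using f g by (simp add: P_def PiE_def extensional_def)
      qed
    qed
  qed
  have U_ext: "Uop q N \<delta> (ext f) c = (\<Prod>i\<in>S. \<delta> (nbhd c N i) (f i))" for f
  proof -
    have sub: "{i. nbhd c N i \<noteq> replicate (length N) q \<or> ext f i \<noteq> q} \<subseteq> S"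
      using Sdef by (auto simp: ext_def)
    have "(\<Prod>i\<in>S. \<delta> (nbhd c N i) (ext f i)) = (\<Prod>i | nbhd c N i \<noteq> replicate (length N) q \<or> ext f i \<noteq> q. \<delta> (nbhd c N i) (ext f i))"
      by (rule prod.mono_neutral_right[OF fin sub]) (auto simp: dq)
    thus ?thesis unfolding Uop_def by (simp add: ext_def)
  qed
  show ?thesis
  proof (rule has_sum_finite_neutralI[where B=D])
    show "finite D" unfolding D_def using finP by simp
    show "D \<subseteq> configs q"
    proof
      fix d assume "d \<in> D"
      then obtain f where "d = ext f" unfolding D_def by auto
      hence "{i. d i \<noteq> q} \<subseteq> S" by (auto simp: ext_def)
      thus "d \<in> configs q" unfolding configs_def using fin finite_subset by auto
    qed
    show "(cmod (Uop q N \<delta> d c))\<^sup>2 = 0" if d: "d \<in> configs q - D" for d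
    proof -
      have "\<exists>i. i \<notin> S \<and> d i \<noteq> q"
      proof (rule ccontr)
        assume "\<not> ?thesis"
        hence "d = ext (restrict d S)" by (auto simp: ext_def fun_eq_iff)
        moreover have "restrict d S \<in> P" by (simp add: P_def)
        ultimately have "d \<in> D" unfolding D_def by blast
        thus False using d by simp
      qed
      then obtain i where i: "i \<notin> S" "d i \<noteq> q" by blast
      have "{i. nbhd c N i \<noteq> replicate (length N) q \<or> d i \<noteq> q} \<subseteq> S \<union> {i. d i \<noteq> q}" using Sdef by auto
      moreover have "finite {i. d i \<noteq> q}" using d by (simp add: configs_def)
      ultimately have "finite {i. nbhd c N i \<noteq> replicate (length N) q \<or> d i \<noteq> q}"
        using fin finite_subset by blast
      moreover have "\<delta> (nbhd c N i) (d i) = 0" using i Sdef dq by simp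
      ultimately have "Uop q N \<delta> d c = 0" unfolding Uop_def
        using i by (intro prod_zero) auto
      thus ?thesis by simp
    qed
    have "(\<Sum>d\<in>D. (cmod (Uop q N \<delta> d c))\<^sup>2) = (\<Sum>f\<in>P. (cmod (Uop q N \<delta> (ext f) c))\<^sup>2)"
      unfolding D_def by (rule sum.reindex[OF injP, unfolded comp_def])
    also have "\<dots> = (\<Sum>f\<in>P. \<Prod>i\<in>S. (cmod (\<delta> (nbhd c N i) (f i)))\<^sup>2)"
      by (simp add: U_ext prod_norm[symmetric] prod_power_distrib)
    also have "\<dots> = (\<Prod>i\<in>S. \<Sum>y\<in>UNIV. (cmod (\<delta> (nbhd c N i) y))\<^sup>2)"
      unfolding P_def by (rule prod_sum_PiE[symmetric]) (auto simp: fin)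
    also have "\<dots> = (\<Prod>i\<in>S. (vnorm (\<delta> (nbhd c N i)))^2)"
      unfolding vnorm_def by (simp add: sum_nonneg)
    finally show "(\<Prod>i\<in>S. (vnorm (\<delta> (nbhd c N i)))^2) = (\<Sum>d\<in>D. (cmod (Uop q N \<delta> d c))\<^sup>2)" by simp
  qed
qed
definition word :: "(int \<Rightarrow> 's) \<Rightarrow> int \<Rightarrow> nat \<Rightarrow> 's list" where
  "word c j m = map (\<lambda>k. c (j + int k)) [0..<m]"

lemma length_word[simp]: "length (word c j m) = m" by (simp add: word_def)
lemma word_nth[simp]: "k < m \<Longrightarrow> word c j m ! k = c (j + int k)" by (simp add: word_def)
lemma word_Suc_cons: "word c j (Suc m) = c j # word c (j+1) m"
  by (rule nth_equalityI) (auto simp: nth_Cons algebra_simps split: nat.split)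
lemma word_Suc_snoc: "word c j (Suc m) = word c j m @ [c (j + int m)]"
  by (simp add: word_def)
lemma word_rep: "(\<And>k. k < m \<Longrightarrow> c (j + int k) = q) \<Longrightarrow> word c j m = replicate m q"
  by (rule nth_equalityI) auto

lemma simple_nth:
  assumes "sorted_wrt (<) (N::int list)" "N \<noteq> []" "last N - hd N = int (length N) - 1" "k < length N"
  shows "N ! k = hd N + int k"
proof -
  have A: "N ! j \<ge> N ! i + int (j - i)" if "i \<le> j" "j < length N" for i j
    using that
  proof (induction j rule: dec_induct)
    case base then show ?case by simp
  next
    case (step j)
    have "N ! j < N ! Suc j" using sorted_wrt_nth_less[OF assms(1), of j "Suc j"] step by simp
    moreover have "N ! j \<ge> N ! i + int (j - i)" using step by simp
    ultimately show ?case using step by (simp add: Suc_diff_le)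
  qed
  have h: "hd N = N ! 0" using assms(2) by (simp add: hd_conv_nth)
  have l: "last N = N ! (length N - 1)" using assms(2) by (simp add: last_conv_nth)
  have 1: "N ! k \<ge> N ! 0 + int k" using A[of 0 k] assms by simp
  have 2: "N ! (length N - 1) \<ge> N ! k + int (length N - 1 - k)" using A[of k "length N - 1"] assms by simp
  show ?thesis using 1 2 h l assms(3,4) by simp
qed

lemma nbhd_word:
  assumes "is_lqca q N \<delta>" "simple_lqca N"
  shows "nbhd c N i = word c (i + hd N) (length N)"
proof (rule nth_equalityI)
  show "length (nbhd c N i) = length (word c (i + hd N) (length N))" by (simp add: nbhd_def)
  fix k assume "k < length (nbhd c N i)"
  hence k: "k < length N" by (simp add: nbhd_def)
  have "N ! k = hd N + int k" using assms k unfolding is_lqca_def simple_lqca_def by (intro simple_nth) auto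
  thus "nbhd c N i ! k = word c (i + hd N) (length N) ! k" using k by (simp add: nbhd_def add.assoc)
qed

lemma col_iff:
  fixes q :: "'s::finite" and \<delta> :: "'s list \<Rightarrow> 's \<Rightarrow> complex"
  assumes "is_lqca q N \<delta>"
    and fin: "finite S" and Sdef: "\<forall>i. i \<notin> S \<longrightarrow> nbhd c N i = replicate (length N) q"
  shows "column_norm_one q N \<delta> c \<longleftrightarrow> (\<Prod>i\<in>S. vnorm (\<delta> (nbhd c N i))) = 1"
proof -
  have dq: "\<forall>x. \<delta> (replicate (length N) q) x = (if x = q then 1 else 0)" using assms(1) by (simp add: is_lqca_def)
  have hs: "((\<lambda>d. (cmod (Uop q N \<delta> d c))^2) has_sum ((\<Prod>i\<in>S. vnorm (\<delta> (nbhd c N i)))^2)) (configs q)"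
    using col_sum[where q=q and N=N and \<delta>=\<delta> and c=c and S=S, OF dq fin Sdef] by (simp add: prod_power_distrib)
  have nn: "(\<Prod>i\<in>S. vnorm (\<delta> (nbhd c N i))) \<ge> 0" by (intro prod_nonneg) (simp add: vnorm_def sum_nonneg)
  have "column_norm_one q N \<delta> c \<longleftrightarrow> (\<Prod>i\<in>S. vnorm (\<delta> (nbhd c N i)))^2 = 1"
    unfolding column_norm_one_def using hs has_sum_unique by metis
  also have "\<dots> \<longleftrightarrow> (\<Prod>i\<in>S. vnorm (\<delta> (nbhd c N i))) = 1"
    using nn by (metis power2_eq_1_iff power_one neg_0_le_iff_le not_one_le_zero)
  finally show ?thesis .
qed

lemma key:
  fixes q :: "'s::finite" and \<delta> :: "'s list \<Rightarrow> 's \<Rightarrow> complex"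
  assumes "is_lqca q N \<delta>" "simple_lqca N"
    and hw: "\<forall>p. (p < lo \<or> p \<ge> lo + int K) \<longrightarrow> word c p (length N) = replicate (length N) q"
  shows "column_norm_one q N \<delta> c \<longleftrightarrow> (\<Prod>t<K. vnorm (\<delta> (word c (lo + int t) (length N)))) = 1"
proof -
  define S where "S = (\<lambda>t. lo + int t - hd N) ` {..<K}"
  have fin: "finite S" by (simp add: S_def)
  have Sdef: "\<forall>i. i \<notin> S \<longrightarrow> nbhd c N i = replicate (length N) q"
  proof (intro allI impI)
    fix i assume i: "i \<notin> S"
    have "i + hd N < lo \<or> i + hd N \<ge> lo + int K"
    proof (rule ccontr)
      assume "\<not> ?thesis"
      hence "nat (i + hd N - lo) < K" "i = lo + int (nat (i + hd N - lo)) - hd N" by auto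
      hence "i \<in> S" unfolding S_def by blast
      thus False using i by simp
    qed
    hence "word c (i + hd N) (length N) = replicate (length N) q" using hw by blast
    thus "nbhd c N i = replicate (length N) q" using nbhd_word[OF assms(1,2), of c i] by simp
  qed
  have inj: "inj_on (\<lambda>t. lo + int t - hd N) {..<K}" by (auto simp: inj_on_def)
  have "(\<Prod>i\<in>S. vnorm (\<delta> (nbhd c N i))) = (\<Prod>t<K. vnorm (\<delta> (nbhd c N (lo + int t - hd N))))"
    unfolding S_def by (subst prod.reindex[OF inj]) simp
  also have "\<dots> = (\<Prod>t<K. vnorm (\<delta> (word c (lo + int t) (length N))))"
    by (simp add: nbhd_word[OF assms(1,2)])
  finally show ?thesis using col_iff[OF assms(1) fin Sdef] by simp
qed

lemma path_of_config:
  assumes r: "r \<ge> 2" and vs: "vs = map (\<lambda>t. word c (lo + int t) (r - 1)) [0..<Suc K]"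
  shows "gpath r vs" "path_weight \<delta> vs = (\<Prod>t<K. vnorm (\<delta> (word c (lo + int t) r)))"
proof -
  have nth: "vs ! t = word c (lo + int t) (r - 1)" if "t \<le> K" for t
    using that vs by (simp del: upt_Suc)
  have len: "length vs = Suc K" using vs by simp
  have r1: "r - 1 = Suc (r - 2)" using r by simp
  have r0: "r = Suc (r - 1)" using r by simp
  show "gpath r vs"
    unfolding gpath_def
  proof (intro conjI allI impI ballI)
    show "vs \<noteq> []" using len by auto
    fix v assume "v \<in> set vs" thus "gvert r v" using vs by (auto simp: gvert_def)
  next
    fix j assume "Suc j < length vs"
    hence j: "Suc j \<le> K" using len by simp
    have a: "vs ! j = c (lo + int j) # word c (lo + int j + 1) (r - 2)"
      using nth[of j] j r1 word_Suc_cons by simp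
    have b0: "vs ! Suc j = word c (lo + int j + 1) (Suc (r - 2))"
      using nth[of "Suc j"] j r1 by (simp add: ac_simps)
    have b: "vs ! Suc j = word c (lo + int j + 1) (r - 2) @ [c (lo + int j + 1 + int (r - 2))]"
      using b0 word_Suc_snoc by simp
    show "gedge r (vs ! j) (vs ! Suc j)" unfolding gedge_def using a b by auto
  qed
  have "path_weight \<delta> vs = (\<Prod>j<K. gweight \<delta> (vs ! j) (vs ! Suc j))"
    unfolding path_weight_def len by simp
  also have "\<dots> = (\<Prod>t<K. vnorm (\<delta> (word c (lo + int t) r)))"
  proof (rule prod.cong[OF refl])
    fix t assume "t \<in> {..<K}"
    hence t: "t < K" by simp
    have "hd (vs ! t) = c (lo + int t)" using nth[of t] t r1 by (simp add: word_Suc_cons)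
    moreover have "vs ! Suc t = word c (lo + int t + 1) (r - 1)" using nth[of "Suc t"] t by (simp add: ac_simps)
    ultimately have "hd (vs ! t) # vs ! Suc t = word c (lo + int t) r"
      using word_Suc_cons[of c "lo + int t" "r - 1"] r0 by simp
    thus "gweight \<delta> (vs ! t) (vs ! Suc t) = vnorm (\<delta> (word c (lo + int t) r))"
      by (simp add: gweight_def)
  qed
  finally show "path_weight \<delta> vs = (\<Prod>t<K. vnorm (\<delta> (word c (lo + int t) r)))" .
qed

theorem lemma4:
  fixes q :: "'s::finite" and N :: "int list" and \<delta> :: "'s list \<Rightarrow> 's \<Rightarrow> complex"
  assumes "is_lqca q N \<delta>" and "simple_lqca N" and "length N \<ge> 2"
  shows "(\<forall>c\<in>configs q. column_norm_one q N \<delta> c) \<longleftrightarrow>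
         (\<forall>vs. q_cycle q (length N) vs \<longrightarrow> path_weight \<delta> vs = 1)"
proof
  define r where "r = length N"
  have r2: "r \<ge> 2" using assms(3) r_def by simp
  assume H: "\<forall>c\<in>configs q. column_norm_one q N \<delta> c"
  show "\<forall>vs. q_cycle q (length N) vs \<longrightarrow> path_weight \<delta> vs = 1"
  proof (intro allI impI)
    fix vs assume qc: "q_cycle q (length N) vs"
    define K where "K = length vs - 1"
    have lenv: "length vs = Suc K" "K \<ge> 1" using qc unfolding K_def q_cycle_def by auto
    have gp: "gpath r vs" and hd: "hd vs = replicate (r - 1) q" and hl: "hd vs = last vs"
      using qc unfolding q_cycle_def r_def by auto
    define lo :: int where "lo = 1 - int r"
    define c where "c = (\<lambda>j. if 0 \<le> j \<and> j < int K then last (vs ! Suc (nat j)) else q)"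
    have vsnth: "vs ! t = word c (lo + int t) (r - 1)" if "t \<le> K" for t
      using that
    proof (induction t)
      case 0
      have "word c lo (r - 1) = replicate (r - 1) q"
        by (rule word_rep) (auto simp: c_def lo_def)
      moreover have "vs \<noteq> []" using lenv by auto
      ultimately show ?case using hd hd_conv_nth[of vs] by simp
    next
      case (Suc t)
      have "gedge r (vs ! t) (vs ! Suc t)" using gp Suc.prems lenv unfolding gpath_def by simp
      then obtain x y z where z: "length z = r - 2" "vs ! t = x # z" "vs ! Suc t = z @ [y]"
        unfolding gedge_def by blast
      have r1: "r - 1 = Suc (r - 2)" using r2 by simp
      have IH: "vs ! t = word c (lo + int t) (r - 1)" using Suc by simp
      hence "x # z = c (lo + int t) # word c (lo + int t + 1) (r - 2)"
        using z r1 by (simp add: word_Suc_cons)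
      hence zz: "z = word c (lo + int t + 1) (r - 2)" by simp
      have "y = last (vs ! Suc t)" using z by simp
      also have "\<dots> = c (int t)" using Suc.prems by (simp add: c_def)
      finally have yy: "y = c (lo + int t + 1 + int (r - 2))" using r2 by (simp add: lo_def of_nat_diff)
      have "vs ! Suc t = word c (lo + int t + 1) (Suc (r - 2))"
        using z zz yy by (simp add: word_Suc_snoc)
      thus ?case using r1 by (simp add: ac_simps)
    qed
    have vseq: "vs = map (\<lambda>t. word c (lo + int t) (r - 1)) [0..<Suc K]"
      by (rule nth_equalityI) (auto simp: lenv vsnth simp del: upt_Suc)
    note pc = path_of_config[OF r2 vseq]
    have lastq: "word c (lo + int K) (r - 1) = replicate (r - 1) q"
      proof -
      have "vs \<noteq> []" using lenv by auto
      thus ?thesis using vsnth[of K] hd hl lenv last_conv_nth[of vs] by auto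
    qed
    have cconf: "c \<in> configs q"
    proof -
      have "{j. c j \<noteq> q} \<subseteq> {0..<int K}" by (auto simp: c_def split: if_splits)
      thus ?thesis unfolding configs_def using finite_subset by blast
    qed
    have hw: "\<forall>p. (p < lo \<or> p \<ge> lo + int K) \<longrightarrow> word c p r = replicate r q"
    proof (intro allI impI)
      fix p assume p: "p < lo \<or> p \<ge> lo + int K"
      show "word c p r = replicate r q"
      proof (rule word_rep)
        fix k assume k: "k < r"
        show "c (p + int k) = q"
        proof (cases "p < lo")
          case True thus ?thesis using k by (simp add: c_def lo_def)
        next
          case False
          hence p2: "p \<ge> lo + int K" using p by simp
          show ?thesis
          proof (cases "p + int k \<ge> int K")
            case True thus ?thesis by (simp add: c_def)
          next
            case False
            define m where "m = nat (p + int k - (lo + int K))"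
            have m: "m < r - 1" "p + int k = lo + int K + int m"
              using False p2 r2 by (auto simp: m_def lo_def)
            have "word c (lo + int K) (r - 1) ! m = q" using lastq m by simp
            thus ?thesis using m by simp
          qed
        qed
      qed
    qed
    have "column_norm_one q N \<delta> c" using H cconf by blast
    hence "(\<Prod>t<K. vnorm (\<delta> (word c (lo + int t) r))) = 1"
      using key[OF assms(1,2), of lo K c] hw r_def by simp
    thus "path_weight \<delta> vs = 1" using pc(2) r_def by simp
  qed
next
  define r where "r = length N"
  have r2: "r \<ge> 2" using assms(3) r_def by simp
  assume H: "\<forall>vs. q_cycle q (length N) vs \<longrightarrow> path_weight \<delta> vs = 1"
  show "\<forall>c\<in>configs q. column_norm_one q N \<delta> c"
  proof
    fix c assume "c \<in> configs q"
    hence fin: "finite {i. c i \<noteq> q}" by (simp add: configs_def)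
    define M where "M = (\<Sum>i\<in>{i. c i \<noteq> q}. \<bar>i\<bar>)"
    have M: "\<bar>i\<bar> \<le> M" if "c i \<noteq> q" for i
      unfolding M_def using that fin by (intro member_le_sum) auto
    have M0: "M \<ge> 0" unfolding M_def by (simp add: sum_nonneg)
    have cq: "c i = q" if "i < - M \<or> i > M" for i using M[of i] that by fastforce
    define lo where "lo = - M - int r"
    define K where "K = nat (2 * M + int r + 1)"
    have K: "int K = 2 * M + int r + 1" "K \<ge> 1" using M0 by (auto simp: K_def)
    define vs where "vs = map (\<lambda>t. word c (lo + int t) (r - 1)) [0..<Suc K]"
    note pc = path_of_config[OF r2 vs_def]
    have hw: "\<forall>p. (p < lo \<or> p \<ge> lo + int K) \<longrightarrow> word c p r = replicate r q"
    proof (intro allI impI)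
      fix p assume p: "p < lo \<or> p \<ge> lo + int K"
      show "word c p r = replicate r q"
        by (rule word_rep, rule cq) (use p K in \<open>auto simp: lo_def\<close>)
    qed
    have qc: "q_cycle q (length N) vs"
    proof -
      have "hd vs = word c lo (r - 1)" by (simp add: vs_def upt_conv_Cons del: upt_Suc)
      also have "\<dots> = replicate (r - 1) q"
        by (rule word_rep, rule cq) (use r2 in \<open>auto simp: lo_def\<close>)
      finally have h: "hd vs = replicate (r - 1) q" .
      have "last vs = word c (lo + int K) (r - 1)" by (simp add: vs_def last_map del: upt_Suc)
      also have "\<dots> = replicate (r - 1) q"
        by (rule word_rep, rule cq) (use K in \<open>auto simp: lo_def\<close>)
      finally show ?thesis unfolding q_cycle_def using pc(1) h K r_def by (simp add: vs_def)
    qed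
    have "path_weight \<delta> vs = 1" using H qc by blast
    hence "(\<Prod>t<K. vnorm (\<delta> (word c (lo + int t) r))) = 1" using pc(2) by simp
    thus "column_norm_one q N \<delta> c" using key[OF assms(1,2), of lo K c] hw r_def by simp
  qed
qed

end
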